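(* Let $\mathbb F$ be a field. The $\mathsf p$-family $(\mathrm{HC}^2)=(\mathrm{HC}_n^2)_{n\in\mathbb N}$ does not lie in $\mathrm{VNPC}(\trianglelefteq_{\mathsf p})$, i.e. $(\mathrm{HC})\not\trianglelefteq_{\mathsf p}(\mathrm{HC}^2)$.
   Context: $\varepsilon$ is a new indeterminate. A $\mathsf p$-family $(f)=(f_n)_{n\in\mathbb N}$ is a sequence of multivariate polynomials whose number of variables and degree are polynomially bounded in $n$. For polynomials over a field $K$, $f\le g$ (projection) means $f=g(\alpha_1,\dots,\alpha_M)$ where each $\alpha_i$ is a variable of $f$ or an element of $K$. For $f,g$ over $\mathbb F$, $f\trianglelefteq g$ if $f+\varepsilon h\le g$ (projection over $\mathbb F(\varepsilon)$) for some polynomial $h$ over $\mathbb F[\varepsilon]$; $(f)\trianglelefteq_{\mathsf p}(g)$ if there is a polynomially bounded $t:\mathbb N\to\mathbb N$ with $f_n\trianglelefteq g_{t(n)}$ for all $n$. $\mathrm{HC}_n=\sum_{\pi}\prod_{i=1}^n x_{i,\pi(i)}$, summing over permutations $\pi$ of $\{1,\dots,n\}$ that are $n$-cycles. $\mathrm{VNP}$ is the set of $\mathsf p$-families $(f)$ with $(f)\le_{\mathsf p}(\mathrm{HC})$ (where $(f)\le_{\mathsf p}(g)$ means $f_n\le g_{t(n)}$ for a polynomially bounded $t$), and $\mathrm{VNPC}(\trianglelefteq_{\mathsf p})=\{(f)\in\mathrm{VNP}:(\mathrm{HC})\trianglelefteq_{\mathsf p}(f)\}$. *)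

theory Defs
  imports "HOL-Library.Poly_Mapping" "HOL-Computational_Algebra.Polynomial"
    "HOL-Computational_Algebra.Fraction_Field" "HOL-Combinatorics.Permutations"
begin

type_synonym ('v, 'k) mpoly = "('v \<Rightarrow>\<^sub>0 nat) \<Rightarrow>\<^sub>0 'k"

definition mvar :: "'v \<Rightarrow> ('v, 'k::comm_ring_1) mpoly" where
  "mvar v = Poly_Mapping.single (Poly_Mapping.single v 1) 1"

definition mconst :: "'k::comm_ring_1 \<Rightarrow> ('v, 'k) mpoly" where
  "mconst c = Poly_Mapping.single 0 c"

definition mvars :: "('v, 'k::zero) mpoly \<Rightarrow> 'v set" where
  "mvars p = (\<Union>m\<in>Poly_Mapping.keys p. Poly_Mapping.keys m)"

definition msubst :: "('w \<Rightarrow> ('v, 'k::comm_ring_1) mpoly) \<Rightarrow> ('w, 'k) mpoly \<Rightarrow> ('v, 'k) mpoly" where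
  "msubst \<sigma> p = (\<Sum>m\<in>Poly_Mapping.keys p. mconst (Poly_Mapping.lookup p m) * (\<Prod>w\<in>Poly_Mapping.keys m. \<sigma> w ^ Poly_Mapping.lookup m w))"

text \<open>Projection f \<le> g: f = g(\<alpha>_1,...,\<alpha>_M) where each \<alpha>_i is a variable of f
  (from the variable set X of f) or a constant of K.\<close>
definition proj_le :: "'v set \<Rightarrow> ('v, 'k::comm_ring_1) mpoly \<Rightarrow> ('w, 'k) mpoly \<Rightarrow> bool" where
  "proj_le X f g \<longleftrightarrow> (\<exists>\<sigma>. (\<forall>w. (\<exists>v\<in>X. \<sigma> w = mvar v) \<or> (\<exists>c. \<sigma> w = mconst c)) \<and> f = msubst \<sigma> g)"

text \<open>The field F(\<epsilon>) of rational functions is 'a poly fract; F and F[\<epsilon>] embed into it.\<close>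
definition eps :: "'a::field poly fract" where
  "eps = Fract [:0, 1:] 1"

definition emb_F :: "('v, 'a::field) mpoly \<Rightarrow> ('v, 'a poly fract) mpoly" where
  "emb_F p = Poly_Mapping.map (\<lambda>c. Fract [:c:] 1) p"

definition emb_Feps :: "('v, 'a::field poly) mpoly \<Rightarrow> ('v, 'a poly fract) mpoly" where
  "emb_Feps p = Poly_Mapping.map (\<lambda>c. Fract c 1) p"

definition border_le :: "'v set \<Rightarrow> ('v, 'a::field) mpoly \<Rightarrow> ('w, 'a) mpoly \<Rightarrow> bool" where
  "border_le X f g \<longleftrightarrow> (\<exists>h :: ('v, 'a poly) mpoly. mvars h \<subseteq> X \<and>
      proj_le X (emb_F f + mconst eps * emb_Feps h) (emb_F g))"

definition poly_bounded :: "(nat \<Rightarrow> nat) \<Rightarrow> bool" where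
  "poly_bounded t \<longleftrightarrow> (\<exists>c k. \<forall>n. t n \<le> c * n ^ k + c)"

definition hc_vars :: "nat \<Rightarrow> (nat \<times> nat) set" where
  "hc_vars n = {1..n} \<times> {1..n}"

definition is_ncycle :: "nat \<Rightarrow> (nat \<Rightarrow> nat) \<Rightarrow> bool" where
  "is_ncycle n \<pi> \<longleftrightarrow> \<pi> permutes {1..n} \<and> (\<forall>i\<in>{1..n}. \<forall>j\<in>{1..n}. \<exists>k. (\<pi> ^^ k) i = j)"

definition HC :: "nat \<Rightarrow> (nat \<times> nat, 'a::field) mpoly" where
  "HC n = (\<Sum>\<pi>\<in>{\<pi>. is_ncycle n \<pi>}. \<Prod>i\<in>{1..n}. mvar (i, \<pi> i))"

definition border_p_le :: "(nat \<Rightarrow> 'v set) \<Rightarrow> (nat \<Rightarrow> ('v, 'a::field) mpoly) \<Rightarrow> (nat \<Rightarrow> ('w, 'a) mpoly) \<Rightarrow> bool" where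
  "border_p_le X f g \<longleftrightarrow> (\<exists>t. poly_bounded t \<and> (\<forall>n. border_le (X n) (f n) (g (t n))))"

end

theory Submission
  imports Defs "HOL-Computational_Algebra.Polynomial_Factorial"
begin

definition mon :: "('v \<Rightarrow> 'b::comm_semiring_1) \<Rightarrow> ('v \<Rightarrow>\<^sub>0 nat) \<Rightarrow> 'b" where
  "mon a m = (\<Prod>w\<in>Poly_Mapping.keys m. a w ^ Poly_Mapping.lookup m w)"

lemma mon_superset:
  assumes "finite S" "Poly_Mapping.keys m \<subseteq> S"
  shows "mon a m = (\<Prod>w\<in>S. a w ^ Poly_Mapping.lookup m w)"
  unfolding mon_def
  by (rule prod.mono_neutral_left[OF assms(1,2)]) (auto simp: in_keys_iff)

lemma mon_add: "mon a (m1 + m2) = mon a m1 * mon a m2"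
proof -
  let ?S = "Poly_Mapping.keys m1 \<union> Poly_Mapping.keys m2"
  have f: "finite ?S" by simp
  have k: "Poly_Mapping.keys (m1 + m2) \<subseteq> ?S" by (simp add: keys_add)
  show ?thesis
    by (simp add: mon_superset[OF f k] mon_superset[OF f, of m1] mon_superset[OF f, of m2]
         lookup_add power_add prod.distrib)
qed

lemma mon_zero [simp]: "mon a 0 = 1"
  by (simp add: mon_def)

definition evh :: "('k::zero \<Rightarrow> 'b::comm_ring_1) \<Rightarrow> ('v \<Rightarrow> 'b) \<Rightarrow> ('v, 'k) mpoly \<Rightarrow> 'b" where
  "evh \<phi> a p = (\<Sum>m\<in>Poly_Mapping.keys p. \<phi> (Poly_Mapping.lookup p m) * mon a m)"

lemma evh_superset:
  assumes "\<phi> 0 = 0" "finite S" "Poly_Mapping.keys p \<subseteq> S"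
  shows "evh \<phi> a p = (\<Sum>m\<in>S. \<phi> (Poly_Mapping.lookup p m) * mon a m)"
  unfolding evh_def
  by (rule sum.mono_neutral_left[OF assms(2,3)]) (auto simp: in_keys_iff assms(1))

lemma evh_add:
  assumes "\<phi> 0 = 0" "\<And>x y. \<phi> (x + y) = \<phi> x + \<phi> y"
  shows "evh \<phi> a (p + q) = evh \<phi> a p + evh \<phi> a q"
proof -
  let ?S = "Poly_Mapping.keys p \<union> Poly_Mapping.keys q"
  have f: "finite ?S" by simp
  have k: "Poly_Mapping.keys (p + q) \<subseteq> ?S" by (simp add: keys_add)
  show ?thesis
    by (simp add: evh_superset[where \<phi>=\<phi>, OF assms(1) f k] evh_superset[where \<phi>=\<phi>, OF assms(1) f, of p]
       evh_superset[where \<phi>=\<phi>, OF assms(1) f, of q] lookup_add assms(2) distrib_right sum.distrib)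
qed

lemma evh_zero [simp]: "evh \<phi> a 0 = 0"
  by (simp add: evh_def)

lemma evh_sum:
  assumes "\<phi> 0 = 0" "\<And>x y. \<phi> (x + y) = \<phi> x + \<phi> y"
  shows "evh \<phi> a (sum f A) = (\<Sum>i\<in>A. evh \<phi> a (f i))"
  by (induction A rule: infinite_finite_induct) (auto simp: evh_add[where \<phi>=\<phi>, OF assms])

lemma evh_single:
  assumes "\<phi> 0 = 0"
  shows "evh \<phi> a (Poly_Mapping.single m c) = \<phi> c * mon a m"
  by (subst evh_superset[where \<phi>=\<phi>, OF assms, of "{m}"]) auto

lemma pm_decomp:
  "p = (\<Sum>m\<in>Poly_Mapping.keys p. Poly_Mapping.single m (Poly_Mapping.lookup p m))"
  by (rule poly_mapping_eqI)
     (auto simp: lookup_sum lookup_single when_def in_keys_iff sum.delta' split: if_splits)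

lemma evh_mult:
  assumes "\<phi> 0 = 0" "\<And>x y. \<phi> (x + y) = \<phi> x + \<phi> y" "\<And>x y. \<phi> (x * y) = \<phi> x * \<phi> y"
  shows "evh \<phi> a (p * q) = evh \<phi> a p * evh \<phi> a q"
proof -
  have "p * q = (\<Sum>m\<in>Poly_Mapping.keys p. Poly_Mapping.single m (Poly_Mapping.lookup p m)) *
     (\<Sum>m\<in>Poly_Mapping.keys q. Poly_Mapping.single m (Poly_Mapping.lookup q m))"
    using pm_decomp[of p] pm_decomp[of q] by simp
  also have "\<dots> = (\<Sum>m\<in>Poly_Mapping.keys p. \<Sum>l\<in>Poly_Mapping.keys q.
      Poly_Mapping.single (m + l) (Poly_Mapping.lookup p m * Poly_Mapping.lookup q l))"
    by (simp add: sum_product mult_single)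
  finally have "evh \<phi> a (p * q) = (\<Sum>m\<in>Poly_Mapping.keys p. \<Sum>l\<in>Poly_Mapping.keys q.
      \<phi> (Poly_Mapping.lookup p m) * mon a m * (\<phi> (Poly_Mapping.lookup q l) * mon a l))"
    by (simp add: evh_sum[where \<phi>=\<phi>, OF assms(1,2)] evh_single[where \<phi>=\<phi>, OF assms(1)] assms(3) mon_add mult_ac)
  also have "\<dots> = evh \<phi> a p * evh \<phi> a q"
    by (simp add: evh_def sum_product)
  finally show ?thesis .
qed

locale hom_assms =
  fixes \<phi> :: "'k::comm_ring_1 \<Rightarrow> 'b::comm_ring_1"
  assumes z: "\<phi> 0 = 0" and o: "\<phi> 1 = 1" and ad: "\<And>x y. \<phi> (x + y) = \<phi> x + \<phi> y"
    and mu: "\<And>x y. \<phi> (x * y) = \<phi> x * \<phi> y"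
begin

lemma add: "evh \<phi> a (p + q) = evh \<phi> a p + evh \<phi> a q"
  by (rule evh_add[OF z ad])

lemma mult: "evh \<phi> a (p * q) = evh \<phi> a p * evh \<phi> a q"
  by (rule evh_mult[OF z ad mu])

lemma sum: "evh \<phi> a (sum f A) = (\<Sum>i\<in>A. evh \<phi> a (f i))"
  by (rule evh_sum[OF z ad])

lemma one: "evh \<phi> a 1 = 1"
proof -
  have "evh \<phi> a (1::('a,'k) mpoly) = evh \<phi> a (Poly_Mapping.single 0 1)" by simp
  also have "\<dots> = 1" by (simp only: evh_single[where \<phi>=\<phi>, OF z] o mon_zero mult_1)
  finally show ?thesis .
qed

lemma prod: "evh \<phi> a (prod f A) = (\<Prod>i\<in>A. evh \<phi> a (f i))"
  by (induction A rule: infinite_finite_induct) (auto simp: one mult)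

lemma power: "evh \<phi> a (p ^ n) = evh \<phi> a p ^ n"
  by (induction n) (auto simp: one mult)

lemma mconst: "evh \<phi> a (mconst c) = \<phi> c"
  by (simp add: mconst_def evh_single[where \<phi>=\<phi>, OF z])

lemma mvar: "evh \<phi> a (mvar v) = a v"
  by (simp add: mvar_def evh_single[where \<phi>=\<phi>, OF z] o mon_def)

lemma msubst: "evh \<phi> a (msubst \<sigma> g) = evh \<phi> (\<lambda>w. evh \<phi> a (\<sigma> w)) g"
  unfolding msubst_def by (simp only: sum mult prod power mconst) (simp add: evh_def mon_def)

end

lemma lookup_map: "f 0 = 0 \<Longrightarrow> Poly_Mapping.lookup (Poly_Mapping.map f p) k = f (Poly_Mapping.lookup p k)"
  by transfer (auto simp: when_def)

lemma evh_map:
  assumes "\<phi> 0 = 0" "f 0 = 0"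
  shows "evh \<phi> a (Poly_Mapping.map f p) = evh (\<lambda>c. \<phi> (f c)) a p"
proof -
  have k: "Poly_Mapping.keys (Poly_Mapping.map f p) \<subseteq> Poly_Mapping.keys p"
    by (auto simp: in_keys_iff lookup_map assms(2))
  show ?thesis
    by (simp add: evh_superset[where \<phi>=\<phi>, OF assms(1) finite_keys k] lookup_map assms(2))
       (simp add: evh_def)
qed

lemma HC_1: "HC 1 = mvar (1, 1)"
proof -
  have "{\<pi>. is_ncycle 1 \<pi>} = {id}"
    by (auto simp: is_ncycle_def intro: exI[of _ 0])
  then show ?thesis by (simp add: HC_def)
qed

lemma clear_denoms:
  fixes P :: "'a::idom fract poly"
  shows "\<exists>d Q. d \<noteq> 0 \<and> smult (to_fract d) P = map_poly to_fract Q"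
proof (induction P)
  case 0
  show ?case by (rule exI[of _ 1], rule exI[of _ 0]) simp
next
  case (pCons z P)
  obtain d Q where dQ: "d \<noteq> 0" "smult (to_fract d) P = map_poly to_fract Q" using pCons.IH by blast
  obtain a b where ab: "z = Fract a b" "b \<noteq> 0" by (cases z) auto
  have e: "to_fract (b * d) * z = to_fract (a * d)"
    using ab dQ by (simp add: to_fract_def eq_fract)
  have "smult (to_fract (b * d)) (pCons z P) = pCons (to_fract (a * d)) (smult (to_fract b) (smult (to_fract d) P))"
    using e by (simp add: mult.commute)
  also have "\<dots> = map_poly to_fract (pCons (a * d) (smult b Q))"
    using dQ by (simp add: map_poly_pCons)
  finally show ?case using ab dQ by (intro exI[of _ "b * d"] exI[of _ "pCons (a * d) (smult b Q)"]) simp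
qed

definition ev0 :: "'a::comm_ring_1 poly \<Rightarrow> 'a" where "ev0 c = poly c 0"

lemma ev0_map_mult: "map_poly ev0 (p * q) = map_poly ev0 p * map_poly ev0 q"
  by (intro poly_eqI) (simp add: coeff_map_poly coeff_mult poly_sum ev0_def)

lemma ev0_map_smult: "map_poly ev0 (smult c p) = smult (ev0 c) (map_poly ev0 p)"
  by (intro poly_eqI) (simp add: coeff_map_poly ev0_def)

lemma ev0_G: "map_poly ev0 ([:0, 1:] + smult [:0, 1:] h) = ([:0, 1:] :: 'a::comm_ring_1 poly)"
proof (intro poly_eqI)
  fix n
  show "coeff (map_poly ev0 ([:0, 1:] + smult [:0, 1:] h)) n = coeff [:0, 1:] n"
    by (cases n) (auto simp: coeff_map_poly ev0_def coeff_pCons split: nat.splits)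
qed

lemma descent:
  fixes h :: "'a::field poly poly"
  shows "d \<noteq> 0 \<Longrightarrow> smult (d * d) ([:0, 1:] + smult [:0, 1:] h) \<noteq> Q * Q"
proof (induction "degree d" arbitrary: d Q rule: less_induct)
  case less
  let ?G = "[:0, 1:] + smult [:0, 1:] h"
  show ?case
  proof
    assume eq: "smult (d * d) ?G = Q * Q"
    have m: "smult (ev0 d * ev0 d) [:0, 1:] = map_poly ev0 Q * map_poly ev0 Q"
      using arg_cong[OF eq, of "map_poly ev0"] by (simp add: ev0_map_mult ev0_map_smult ev0_G ev0_def)
    show False
    proof (cases "ev0 d = 0")
      case False
      then have "degree (smult (ev0 d * ev0 d) [:0, 1:]) = 1" by simp
      moreover have "degree (map_poly ev0 Q * map_poly ev0 Q) \<noteq> 1"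
        by (cases "map_poly ev0 Q = 0") (simp_all add: degree_mult_eq, presburger)
      ultimately show False using m by metis
    next
      case True
      then have "[:0, 1:] dvd d" using poly_eq_0_iff_dvd[of d 0] by (simp add: ev0_def)
      then obtain d' where d': "d = [:0, 1:] * d'" by (auto elim: dvdE)
      have d'0: "d' \<noteq> 0" using d' less.prems by auto
      have deg: "degree d' < degree d" using d' d'0 by (simp add: degree_mult_eq)
      have "map_poly ev0 Q * map_poly ev0 Q = 0" using m True by simp
      then have R0: "map_poly ev0 Q = 0" by simp
      have cdv: "[:0, 1:] dvd coeff Q n" for n
      proof -
        have "coeff (map_poly ev0 Q) n = 0" using R0 by simp
        then have "poly (coeff Q n) 0 = 0" by (simp add: coeff_map_poly ev0_def)
        then show ?thesis using poly_eq_0_iff_dvd[of "coeff Q n" 0] by simp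
      qed
      define Q' where "Q' = map_poly (\<lambda>c. c div [:0, 1:]) Q"
      have QQ: "Q = smult [:0, 1:] Q'"
      proof (rule poly_eqI)
        fix n
        have "coeff Q n = [:0, 1:] * (coeff Q n div [:0, 1:])"
          by (rule dvd_mult_div_cancel[symmetric, OF cdv])
        then show "coeff Q n = coeff (smult [:0, 1:] Q') n"
          by (simp add: Q'_def coeff_map_poly)
      qed
      have E2: "smult ([:0, 1:] * [:0, 1:]) (smult (d' * d') ?G) = smult ([:0, 1:] * [:0, 1:]) (Q' * Q')"
        using eq unfolding QQ d' by (simp add: mult_ac)
      have canc: "\<And>e A B. (e::'a poly) \<noteq> 0 \<Longrightarrow> smult e A = smult e B \<Longrightarrow> A = B"
        by (metis diff_eq_diff_eq diff_self smult_diff_right smult_eq_0_iff)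
      have "smult (d' * d') ?G = Q' * Q'" using canc[OF _ E2] by simp
      then show False using less.hyps[OF deg d'0] by simp
    qed
  qed
qed

lemma final2:
  fixes P :: "'a::field poly fract poly" and h :: "'a poly poly"
  assumes eq: "map_poly to_fract ([:0, 1:] + smult [:0, 1:] h) = P ^ 2"
  shows False
proof -
  obtain d Q where dQ: "d \<noteq> 0" "smult (to_fract d) P = map_poly to_fract Q"
    using clear_denoms by blast
  have "map_poly to_fract (smult (d * d) ([:0, 1:] + smult [:0, 1:] h)) =
      smult (to_fract d) P * smult (to_fract d) P"
    by (simp only: fract_poly_smult eq) (simp add: power2_eq_square mult_ac)
  also have "\<dots> = map_poly to_fract (Q * Q)" using dQ by simp
  finally have "smult (d * d) ([:0, 1:] + smult [:0, 1:] h) = Q * Q"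
    by (simp only: fract_poly_eq_iff)
  then show False using descent dQ(1) by blast
qed


lemma evh_hom:
  fixes \<psi> :: "'b::comm_ring_1 \<Rightarrow> 'c::comm_ring_1"
  assumes z: "\<psi> 0 = 0" and o: "\<psi> 1 = 1" and ad: "\<And>x y. \<psi> (x + y) = \<psi> x + \<psi> y"
    and mu: "\<And>x y. \<psi> (x * y) = \<psi> x * \<psi> y"
  shows "\<psi> (evh \<phi> a p) = evh (\<lambda>c. \<psi> (\<phi> c)) (\<lambda>w. \<psi> (a w)) p"
proof -
  have s: "\<psi> (sum f A) = (\<Sum>i\<in>A. \<psi> (f i))" for f :: "_ \<Rightarrow> 'b" and A
    by (induction A rule: infinite_finite_induct) (auto simp: z ad)
  have pr: "\<psi> (prod f A) = (\<Prod>i\<in>A. \<psi> (f i))" for f :: "_ \<Rightarrow> 'b" and A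
    by (induction A rule: infinite_finite_induct) (auto simp: o mu)
  have pw: "\<psi> (x ^ n) = \<psi> x ^ n" for x :: 'b and n
    by (induction n) (auto simp: o mu)
  show ?thesis
    by (simp add: evh_def mon_def s pr pw mu)
qed

lemma const_poly_add: "[:x + y:] = [:x:] + [:y:]"
  by simp

lemma const_poly_mult: "[:x * y:] = [:x:] * ([:y:] :: 'a::comm_ring_1 poly)"
  by simp

theorem lemma2:
  shows "\<not> border_p_le hc_vars (HC :: nat \<Rightarrow> (nat \<times> nat, 'a::field) mpoly) (\<lambda>n. (HC n) ^ 2)"
proof
  assume "border_p_le hc_vars (HC :: nat \<Rightarrow> (nat \<times> nat, 'a::field) mpoly) (\<lambda>n. (HC n) ^ 2)"
  then obtain t where "\<forall>n. border_le (hc_vars n) (HC n :: (nat \<times> nat, 'a) mpoly) (HC (t n) ^ 2)"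
    unfolding border_p_le_def by blast
  then have "border_le (hc_vars 1) (HC 1 :: (nat \<times> nat, 'a) mpoly) (HC (t 1) ^ 2)" by blast
  then obtain h :: "(nat \<times> nat, 'a poly) mpoly" and \<sigma> where
    eq: "emb_F (HC 1 :: (nat \<times> nat, 'a) mpoly) + mconst eps * emb_Feps h =
         msubst \<sigma> (emb_F (HC (t 1) ^ 2 :: (nat \<times> nat, 'a) mpoly))"
    unfolding border_le_def proj_le_def by blast
  define \<phi> :: "'a poly fract \<Rightarrow> 'a poly fract poly" where "\<phi> = (\<lambda>c. [:c:])"
  define a :: "nat \<times> nat \<Rightarrow> 'a poly fract poly" where "a = (\<lambda>_. [:0, 1:])"
  define \<psi> :: "'a \<Rightarrow> 'a poly fract poly" where "\<psi> = (\<lambda>c. [:to_fract [:c:]:])"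
  interpret A: hom_assms \<phi>
    by unfold_locales (simp_all add: \<phi>_def)
  interpret B: hom_assms \<psi>
  proof
    show "\<psi> 0 = 0" by (simp add: \<psi>_def)
    have one1: "[:(1::'a):] = 1" by simp
    show "\<psi> 1 = 1" by (simp only: \<psi>_def one1 to_fract_1) simp
    show "\<psi> (x + y) = \<psi> x + \<psi> y" for x y
      by (simp only: \<psi>_def const_poly_add to_fract_add)
    show "\<psi> (x * y) = \<psi> x * \<psi> y" for x y
      by (simp only: \<psi>_def const_poly_mult to_fract_mult)
  qed
  have F0: "Fract [:0:] 1 = (0 :: 'a poly fract)" by (simp add: Zero_fract_def)
  have F0': "Fract 0 1 = (0 :: 'a poly fract)" by (simp add: Zero_fract_def)
  have L1: "evh \<phi> a (emb_F (HC 1 :: (nat \<times> nat, 'a) mpoly)) = [:0, 1:]"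
  proof -
    have "evh \<phi> a (emb_F (HC 1 :: (nat \<times> nat, 'a) mpoly)) = evh \<psi> a (HC 1)"
      unfolding emb_F_def
      by (subst evh_map) (simp_all add: \<phi>_def \<psi>_def F0 F0' to_fract_def)
    also have "\<dots> = [:0, 1:]" by (simp only: HC_1 B.mvar) (simp add: a_def)
    finally show ?thesis .
  qed
  define h' :: "'a poly poly" where "h' = evh (\<lambda>c. [:c:]) (\<lambda>_. [:0, 1:]) h"
  have L2: "evh \<phi> a (mconst eps * emb_Feps h) = [:eps:] * map_poly to_fract h'"
  proof -
    have "map_poly to_fract h' = evh (\<lambda>c. map_poly to_fract [:c:]) (\<lambda>_. map_poly to_fract [:0, 1:]) h"
      unfolding h'_def by (rule evh_hom) simp_all
    also have "\<dots> = evh (\<lambda>c. \<phi> (Fract c 1)) a h"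
      by (simp add: \<phi>_def a_def map_poly_pCons[where f=to_fract] to_fract_def[symmetric])
    also have "\<dots> = evh \<phi> a (emb_Feps h)"
      unfolding emb_Feps_def by (subst evh_map) (simp_all add: \<phi>_def F0')
    finally have "map_poly to_fract h' = evh \<phi> a (emb_Feps h)" .
    then show ?thesis by (simp only: A.mult A.mconst) (simp add: \<phi>_def)
  qed
  define b where "b = (\<lambda>w. evh \<phi> a (\<sigma> w))"
  define P where "P = evh \<psi> b (HC (t 1))"
  have R: "evh \<phi> a (msubst \<sigma> (emb_F (HC (t 1) ^ 2 :: (nat \<times> nat, 'a) mpoly))) = P ^ 2"
  proof -
    have "evh \<phi> a (msubst \<sigma> (emb_F (HC (t 1) ^ 2 :: (nat \<times> nat, 'a) mpoly))) =
        evh \<phi> b (emb_F (HC (t 1) ^ 2 :: (nat \<times> nat, 'a) mpoly))"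
      by (simp add: A.msubst b_def)
    also have "\<dots> = evh \<psi> b (HC (t 1) ^ 2)"
      unfolding emb_F_def
      by (subst evh_map) (simp_all add: \<phi>_def \<psi>_def F0 F0' to_fract_def)
    also have "\<dots> = P ^ 2" by (simp add: B.power P_def)
    finally show ?thesis .
  qed
  have "[:0, 1:] + [:eps:] * map_poly to_fract h' = P ^ 2"
    using arg_cong[OF eq, of "evh \<phi> a"] by (simp only: A.add L1 L2 R)
  moreover have "map_poly to_fract ([:0, 1:] + smult [:0, 1:] h') = [:0, 1:] + [:eps:] * map_poly to_fract h'"
    by (simp add: eps_def map_poly_pCons[where f=to_fract] to_fract_def[symmetric])
  ultimately show False using final2 by metis
qed

end
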